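(* Let $x\in\Gamma$ and let $r$ be an eigenvalue of the finite symmetric matrix $J_x$. Then at least one of the following holds: (a) $P_{x,x'}(r)=0$; (b) there exist a vertex $y\in\Gamma_x$ and two distinct vertices $y_1,y_2\in N_y$ such that $P_{y_1,y}(r)=P_{y_2,y}(r)=0$.
   Context: Let $\Gamma$ be an infinite connected tree whose vertices are arranged in levels $\ell(x)\in\{0,1,2,\dots\}$: every vertex $x$ is adjacent to exactly one vertex $x'$ with $\ell(x')=\ell(x)+1$; for $\ell(x)\ge 1$ the set $N_x=\{y:\ y'=x\}$ of neighbours of $x$ on level $\ell(x)-1$ is finite and nonempty; $N_x=\emptyset$ if $\ell(x)=0$; there are no other edges. For $x\in\Gamma$, $\Gamma_x$ is the finite subtree consisting of $x$ and all its descendants, and $\Gamma'_x=\Gamma_x\cup\{x'\}$. Fix numbers $\lambda_x>0$ and $\beta_x\in\mathbb R$, $x\in\Gamma$. The Jacobi matrix $J$ acts on functions $v:\Gamma\to\mathbb C$ by $(Jv)(x)=\lambda_x v(x')+\beta_x v(x)+\sum_{y\in N_x}\lambda_y v(y)$. For $x\in\Gamma$, $J_x=P_xJP_x$ restricted to $\ell^2(\Gamma_x)$, where $P_x$ is the orthogonal projection of $\ell^2(\Gamma)$ onto $\ell^2(\Gamma_x)$; i.e. for $w:\Gamma_x\to\mathbb C$ and $t\in\Gamma_x$, $(J_xw)(t)=\beta_tw(t)+\sum_{s\in N_t}\lambda_sw(s)+\lambda_tw(t')$, where the last term is omitted when $t=x$. The polynomials $P_{x,t}$ ($x\in\Gamma$,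 $t\in\Gamma'_x$) are defined recursively on $\ell(x)$: if $\ell(x)=0$, $P_{x,x}=1$, $P_{x,x'}(z)=(z-\beta_x)/\lambda_x$. If $\ell(x)\ge1$: $P_{x,x}$ is the monic least common multiple of $\{P_{y,x}:\ y\in N_x\}$; for $y\in N_x$ and $t\in\Gamma_y$, $P_{x,t}=P_{x,x}P_{y,t}/P_{y,x}$; and $P_{x,x'}=\lambda_x^{-1}\big((z-\beta_x)P_{x,x}-\sum_{y\in N_x}\lambda_yP_{x,y}\big)$. (These are polynomials with real coefficients.) *)

theory Defs
  imports Complex_Main "HOL-Computational_Algebra.Polynomial_Factorial" "HOL-Computational_Algebra.Field_as_Ring"
begin

text \<open>The tree Gamma is encoded by its vertex type 'v, the map par (x to x') and the level
  function lev.  N_x = children par x, Gamma_x = subtree par x.\<close>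

definition children :: "('v \<Rightarrow> 'v) \<Rightarrow> 'v \<Rightarrow> 'v set" where
  "children par x = {y. par y = x}"

definition subtree :: "('v \<Rightarrow> 'v) \<Rightarrow> 'v \<Rightarrow> 'v set" where
  "subtree par x = {t. \<exists>n. (par ^^ n) t = x}"

definition level_tree :: "('v \<Rightarrow> 'v) \<Rightarrow> ('v \<Rightarrow> nat) \<Rightarrow> bool" where
  "level_tree par lev \<longleftrightarrow>
     (\<forall>x. lev (par x) = Suc (lev x)) \<and>
     (\<forall>x. finite (children par x)) \<and>
     (\<forall>x. children par x = {} \<longleftrightarrow> lev x = 0) \<and>
     (\<forall>x y. \<exists>m n. (par ^^ m) x = (par ^^ n) y)"

text \<open>The truncated Jacobi matrix J_x applied to w, evaluated at t in Gamma_x.\<close>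
definition Jsub :: "('v \<Rightarrow> 'v) \<Rightarrow> ('v \<Rightarrow> real) \<Rightarrow> ('v \<Rightarrow> real) \<Rightarrow> 'v
                    \<Rightarrow> ('v \<Rightarrow> complex) \<Rightarrow> 'v \<Rightarrow> complex" where
  "Jsub par lam bet x w t =
     of_real (bet t) * w t + (\<Sum>s\<in>children par t. of_real (lam s) * w s)
     + (if t = x then 0 else of_real (lam t) * w (par t))"

definition is_eigenvalue_Jsub :: "('v \<Rightarrow> 'v) \<Rightarrow> ('v \<Rightarrow> real) \<Rightarrow> ('v \<Rightarrow> real) \<Rightarrow> 'v
                    \<Rightarrow> complex \<Rightarrow> bool" where
  "is_eigenvalue_Jsub par lam bet x r \<longleftrightarrow>
     (\<exists>w. (\<exists>t\<in>subtree par x. w t \<noteq> 0) \<and>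
          (\<forall>t\<in>subtree par x. Jsub par lam bet x w t = r * w t))"

text \<open>Ppoly_aux n x t is P_{x,t} for a vertex x of level n (junk otherwise, or for t outside
  Gamma'_x).  For t in Gamma_y, y in N_x, the vertex y is the ancestor of t on level n.\<close>
fun Ppoly_aux :: "('v \<Rightarrow> 'v) \<Rightarrow> ('v \<Rightarrow> nat) \<Rightarrow> ('v \<Rightarrow> real) \<Rightarrow> ('v \<Rightarrow> real)
                   \<Rightarrow> nat \<Rightarrow> 'v \<Rightarrow> 'v \<Rightarrow> real poly" where
  "Ppoly_aux par lev lam bet 0 x t =
     (if t = x then 1 else if t = par x then smult (1 / lam x) [:- bet x, 1:] else 0)"
| "Ppoly_aux par lev lam bet (Suc n) x t =
     (let Pxx = Lcm ((\<lambda>y. Ppoly_aux par lev lam bet n y x) ` children par x);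
          Pc = (\<lambda>y s. Pxx * Ppoly_aux par lev lam bet n y s div Ppoly_aux par lev lam bet n y x)
      in if t = x then Pxx
         else if t = par x then
           smult (1 / lam x) ([:- bet x, 1:] * Pxx - (\<Sum>y\<in>children par x. smult (lam y) (Pc y y)))
         else Pc ((par ^^ (n - lev t)) t) t)"

definition Ppoly :: "('v \<Rightarrow> 'v) \<Rightarrow> ('v \<Rightarrow> nat) \<Rightarrow> ('v \<Rightarrow> real) \<Rightarrow> ('v \<Rightarrow> real)
                   \<Rightarrow> 'v \<Rightarrow> 'v \<Rightarrow> real poly" where
  "Ppoly par lev lam bet x t = Ppoly_aux par lev lam bet (lev x) x t"

end

theory Submission imports Defs begin

definition ev :: "complex \<Rightarrow> real poly \<Rightarrow> complex" where
  "ev r p = poly (map_poly of_real p) r"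

lemma map_of_real_add: "map_poly (of_real::real\<Rightarrow>complex) (p + q) = map_poly of_real p + map_poly of_real q"
  by (rule poly_eqI) (simp add: coeff_map_poly)
lemma map_of_real_diff: "map_poly (of_real::real\<Rightarrow>complex) (p - q) = map_poly of_real p - map_poly of_real q"
  by (rule poly_eqI) (simp add: coeff_map_poly)
lemma map_of_real_smult: "map_poly (of_real::real\<Rightarrow>complex) (smult c p) = smult (of_real c) (map_poly of_real p)"
  by (rule poly_eqI) (simp add: coeff_map_poly)

lemma ev_add[simp]: "ev r (p + q) = ev r p + ev r q"
  by (simp add: ev_def map_of_real_add)
lemma ev_diff[simp]: "ev r (p - q) = ev r p - ev r q"
  by (simp add: ev_def map_of_real_diff)
lemma ev_smult[simp]: "ev r (smult c p) = of_real c * ev r p"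
  by (simp add: ev_def map_of_real_smult)
lemma ev_pCons[simp]: "ev r (pCons a p) = of_real a + r * ev r p"
  by (simp add: ev_def map_poly_pCons)
lemma ev_0[simp]: "ev r 0 = 0" by (simp add: ev_def)
lemma ev_1[simp]: "ev r 1 = 1" by (simp add: ev_def)
lemma ev_mult[simp]: "ev r (p * q) = ev r p * ev r q"
  by (induction p rule: pCons_induct) (auto simp: algebra_simps)
lemma ev_sum: "ev r (\<Sum>i\<in>A. f i) = (\<Sum>i\<in>A. ev r (f i))"
  by (induction A rule: infinite_finite_induct) auto
lemma ev_prod: "ev r (\<Prod>i\<in>A. f i) = (\<Prod>i\<in>A. ev r (f i))"
  by (induction A rule: infinite_finite_induct) auto
lemma ev_dvd: "q dvd p \<Longrightarrow> ev r q = 0 \<Longrightarrow> ev r p = 0"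
  by (auto elim!: dvdE)

lemma lcm2:
  assumes "finite A" "\<forall>b\<in>A. ev r b \<noteq> 0"
  shows "ev r (Lcm A) \<noteq> 0"
proof
  assume h: "ev r (Lcm A) = 0"
  have "Lcm A dvd (\<Prod>b\<in>A. b)" by (rule Lcm_least) (simp add: dvd_prod_eqI assms(1))
  then have "ev r (\<Prod>b\<in>A. b) = 0" using h ev_dvd by blast
  then show False using assms by (simp add: ev_prod)
qed

lemma lcm1:
  assumes "finite B" "p \<noteq> 0" "\<forall>b\<in>B. ev r b \<noteq> 0"
  shows "ev r (Lcm (insert p B) div p) \<noteq> 0"
proof
  assume h: "ev r (Lcm (insert p B) div p) = 0"
  define L where "L = Lcm (insert p B)"
  have "L dvd p * Lcm B" unfolding L_def by (simp add: lcm_least)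
  moreover have "p * (L div p) = L" unfolding L_def by simp
  ultimately have "p * (L div p) dvd p * Lcm B" by simp
  then have "L div p dvd Lcm B" using assms(2) by simp
  then have "ev r (Lcm B) = 0" using h ev_dvd L_def by blast
  then show False using lcm2 assms by blast
qed

context
  fixes par :: "'v \<Rightarrow> 'v" and lev :: "'v \<Rightarrow> nat"
  assumes tree: "level_tree par lev"
begin

lemma lev_par: "lev (par x) = Suc (lev x)"
  using tree unfolding level_tree_def by blast
lemma fin_ch: "finite (children par x)"
  using tree unfolding level_tree_def by blast
lemma ch_empty: "children par x = {} \<longleftrightarrow> lev x = 0"
  using tree unfolding level_tree_def by blast

lemma lev_pow: "lev ((par ^^ k) s) = lev s + k"
  by (induction k) (auto simp: lev_par)

lemma sub_lev: "s \<in> subtree par t \<Longrightarrow> lev s \<le> lev t \<and> (par ^^ (lev t - lev s)) s = t"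
  unfolding subtree_def by (auto simp: lev_pow)

lemma self_sub[simp]: "t \<in> subtree par t"
  unfolding subtree_def by (auto intro: exI[of _ 0])

lemma ch_lev: "c \<in> children par t \<Longrightarrow> lev t = Suc (lev c)"
  unfolding children_def by (auto simp: lev_par)

lemma sub_trans: "s \<in> subtree par t \<Longrightarrow> t \<in> subtree par u \<Longrightarrow> s \<in> subtree par u"
  unfolding subtree_def by (auto simp: funpow_add[symmetric] simp del: funpow_add) (metis funpow_add comp_apply)

lemma ch_sub: "c \<in> children par t \<Longrightarrow> c \<in> subtree par t"
  unfolding subtree_def children_def by (auto intro!: exI[of _ 1])

lemma sub_ch: "s \<in> subtree par c \<Longrightarrow> c \<in> children par t \<Longrightarrow> s \<in> subtree par t"
  using sub_trans ch_sub by blast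

lemma sub_split: assumes "s \<in> subtree par t" "s \<noteq> t"
  shows "\<exists>c\<in>children par t. s \<in> subtree par c"
proof -
  from assms(1) obtain n where n: "(par ^^ n) s = t" unfolding subtree_def by auto
  with assms(2) obtain m where m: "n = Suc m" by (cases n) auto
  have "par ((par ^^ m) s) = t" using n m by simp
  then show ?thesis unfolding children_def subtree_def by auto
qed

lemma sub_uniq: "s \<in> subtree par c \<Longrightarrow> s \<in> subtree par c' \<Longrightarrow> c \<in> children par t \<Longrightarrow> c' \<in> children par t \<Longrightarrow> c = c'"
  using sub_lev ch_lev by (metis Suc_inject)

lemma sub_lev0: "lev t = 0 \<Longrightarrow> subtree par t = {t}"
  using sub_lev by fastforce


lemma par_ne: "par t \<noteq> t" using lev_par[of t] by auto

definition "LL lam bet t = Lcm ((\<lambda>y. Ppoly par lev lam bet y t) ` children par t)"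

lemma P0:
  assumes "lev t = 0"
  shows "Ppoly par lev lam bet t t = 1"
    "Ppoly par lev lam bet t (par t) = smult (1 / lam t) [:- bet t, 1:]"
  using assms par_ne[of t] by (simp_all add: Ppoly_def)

lemma PS:
  assumes "lev t = Suc n"
  shows "Ppoly par lev lam bet t t = LL lam bet t"
    "Ppoly par lev lam bet t (par t) = smult (1 / lam t) ([:- bet t, 1:] * LL lam bet t -
        (\<Sum>y\<in>children par t. smult (lam y) (LL lam bet t * Ppoly par lev lam bet y y div Ppoly par lev lam bet y t)))"
    "c \<in> children par t \<Longrightarrow> s \<in> subtree par c \<Longrightarrow>
       Ppoly par lev lam bet t s = LL lam bet t * Ppoly par lev lam bet c s div Ppoly par lev lam bet c t"
proof -
  have ch: "\<And>y. y \<in> children par t \<Longrightarrow> lev y = n" using ch_lev assms by fastforce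
  have img: "(\<lambda>y. Ppoly_aux par lev lam bet n y t) ` children par t = (\<lambda>y. Ppoly par lev lam bet y t) ` children par t"
    by (rule image_cong) (auto simp: Ppoly_def ch)
  show "Ppoly par lev lam bet t t = LL lam bet t"
    by (simp add: Ppoly_def assms LL_def img)
  have sm: "(\<Sum>y\<in>children par t. smult (lam y) (LL lam bet t * Ppoly_aux par lev lam bet n y y div Ppoly_aux par lev lam bet n y t))
     = (\<Sum>y\<in>children par t. smult (lam y) (LL lam bet t * Ppoly par lev lam bet y y div Ppoly par lev lam bet y t))"
    by (rule sum.cong) (auto simp: Ppoly_def ch)
  show "Ppoly par lev lam bet t (par t) = smult (1 / lam t) ([:- bet t, 1:] * LL lam bet t -
        (\<Sum>y\<in>children par t. smult (lam y) (LL lam bet t * Ppoly par lev lam bet y y div Ppoly par lev lam bet y t)))"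
    using par_ne[of t] sm by (simp add: Ppoly_def assms LL_def img Let_def)
  assume c: "c \<in> children par t" and s: "s \<in> subtree par c"
  have "lev s \<le> n" "(par ^^ (n - lev s)) s = c" using sub_lev[OF s] ch[OF c] by auto
  moreover have "s \<noteq> t" "s \<noteq> par t" using \<open>lev s \<le> n\<close> assms lev_par[of t] by auto
  ultimately show "Ppoly par lev lam bet t s = LL lam bet t * Ppoly par lev lam bet c s div Ppoly par lev lam bet c t"
    using ch[OF c] by (simp add: Ppoly_def assms LL_def img Let_def)
qed


lemma Pc_eq: "p dvd (L::real poly) \<Longrightarrow> L * P div p = (L div p) * P"
  by (metis div_mult_swap mult.commute)

lemma Pnz:
  assumes lam_pos: "\<forall>v. lam v > 0"
  shows "Ppoly par lev lam bet t t \<noteq> 0 \<and> degree (Ppoly par lev lam bet t (par t)) = Suc (degree (Ppoly par lev lam bet t t))"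
proof (induction "lev t" arbitrary: t)
  case 0
  then show ?case using lam_pos[rule_format, of t] by (simp add: P0)
next
  case (Suc n)
  let ?P = "Ppoly par lev lam bet"
  define L where "L = LL lam bet t"
  have chl: "\<And>c. c \<in> children par t \<Longrightarrow> lev c = n" using ch_lev Suc(2) by fastforce
  have pnz: "\<And>c. c \<in> children par t \<Longrightarrow> ?P c t \<noteq> 0"
  proof -
    fix c assume c: "c \<in> children par t"
    then have "par c = t" by (simp add: children_def)
    with Suc(1)[of c] chl[OF c] show "?P c t \<noteq> 0" by (metis degree_0 nat.distinct(1))
  qed
  have Lnz: "L \<noteq> 0" unfolding L_def LL_def using pnz fin_ch by (subst Lcm_0_iff) auto
  have dv: "\<And>c. c \<in> children par t \<Longrightarrow> ?P c t dvd L" unfolding L_def LL_def by (auto intro: dvd_Lcm)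
  have degc: "degree (smult (lam c) (L * ?P c c div ?P c t)) \<le> degree L" if c: "c \<in> children par t" for c
  proof -
    have pc: "par c = t" using c by (simp add: children_def)
    have IH: "?P c c \<noteq> 0" "degree (?P c t) = Suc (degree (?P c c))" using Suc(1)[of c] chl[OF c] pc by auto
    define Q where "Q = L div ?P c t"
    have LQ: "L = ?P c t * Q" using dv[OF c] Q_def by simp
    have Qnz: "Q \<noteq> 0" using LQ Lnz by auto
    have "degree (L * ?P c c div ?P c t) = degree (Q * ?P c c)" using Pc_eq[OF dv[OF c]] Q_def by simp
    also have "\<dots> \<le> degree Q + degree (?P c c)" by (rule degree_mult_le)
    also have "\<dots> \<le> degree L" using LQ degree_mult_eq[OF pnz[OF c] Qnz] IH by simp
    finally show ?thesis using degree_smult_le order_trans by blast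
  qed
  have dS: "degree (\<Sum>y\<in>children par t. smult (lam y) (L * ?P y y div ?P y t)) < degree ([:- bet t, 1:] * L)"
  proof -
    have "degree (\<Sum>y\<in>children par t. smult (lam y) (L * ?P y y div ?P y t)) \<le> degree L"
      by (rule degree_sum_le[OF fin_ch]) (rule degc)
    moreover have "degree ([:- bet t, 1:] * L) = Suc (degree L)" using degree_mult_eq[of "[:- bet t, 1:]" L] Lnz by simp
    ultimately show ?thesis by simp
  qed
  have "degree ([:- bet t, 1:] * L - (\<Sum>y\<in>children par t. smult (lam y) (L * ?P y y div ?P y t))) = degree ([:- bet t, 1:] * L)"
    using degree_add_eq_left[of "- (\<Sum>y\<in>children par t. smult (lam y) (L * ?P y y div ?P y t))"] dS by simp
  also have "\<dots> = Suc (degree L)" using degree_mult_eq[of "[:- bet t, 1:]" L] Lnz by simp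
  finally show ?case using PS[OF Suc(2)[symmetric]] Lnz lam_pos[rule_format, of t] unfolding L_def by simp
qed


lemma inv:
  assumes lam_pos: "\<forall>v. lam v > 0"
  and eqs: "\<forall>s\<in>subtree par x. s \<noteq> x \<longrightarrow> of_real (bet s) * w s + (\<Sum>c\<in>children par s. of_real (lam c) * w c) + of_real (lam s) * w (par s) = r * w s"
  and nob: "\<not> (\<exists>y\<in>subtree par x. \<exists>y1\<in>children par y. \<exists>y2\<in>children par y. y1 \<noteq> y2 \<and>
            ev r (Ppoly par lev lam bet y1 y) = 0 \<and> ev r (Ppoly par lev lam bet y2 y) = 0)"
  shows "t \<in> subtree par x \<Longrightarrow> \<exists>a. (\<forall>s\<in>subtree par t. w s = a * ev r (Ppoly par lev lam bet t s)) \<and>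
     (r - of_real (bet t)) * w t - (\<Sum>c\<in>children par t. of_real (lam c) * w c) = of_real (lam t) * a * ev r (Ppoly par lev lam bet t (par t))"
proof (induction "lev t" arbitrary: t)
  case 0
  have lt: "complex_of_real (lam t) \<noteq> 0" using lam_pos[rule_format, of t] by simp
  have ch: "children par t = {}" using 0 ch_empty by simp
  show ?case
    by (rule exI[of _ "w t"]) (use 0 lt ch in \<open>auto simp: sub_lev0 P0 field_simps\<close>)
next
  case (Suc n t)
  let ?P = "Ppoly par lev lam bet"
  define L where "L = LL lam bet t"
  define Q where "Q c = L div ?P c t" for c
  have chl: "\<And>c. c \<in> children par t \<Longrightarrow> lev c = n" using ch_lev Suc(2) by fastforce
  have chx: "\<And>c. c \<in> children par t \<Longrightarrow> c \<in> subtree par x" using sub_ch Suc(3) sub_trans ch_sub by blast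
  have chnx: "\<And>c. c \<in> children par t \<Longrightarrow> c \<noteq> x"
    using chl sub_lev[OF Suc(3)] Suc(2) by fastforce
  have pc: "\<And>c. c \<in> children par t \<Longrightarrow> par c = t" by (simp add: children_def)
  have "\<forall>c\<in>children par t. \<exists>a. (\<forall>s\<in>subtree par c. w s = a * ev r (?P c s)) \<and>
     (r - of_real (bet c)) * w c - (\<Sum>d\<in>children par c. of_real (lam d) * w d) = of_real (lam c) * a * ev r (?P c (par c))"
    using Suc(1) chl chx by metis
  then obtain A where A: "\<And>c. c \<in> children par t \<Longrightarrow> (\<forall>s\<in>subtree par c. w s = A c * ev r (?P c s)) \<and>
     (r - of_real (bet c)) * w c - (\<Sum>d\<in>children par c. of_real (lam d) * w d) = of_real (lam c) * A c * ev r (?P c (par c))"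
    by metis
  have wt: "w t = A c * ev r (?P c t)" if c: "c \<in> children par t" for c
  proof -
    have e: "of_real (bet c) * w c + (\<Sum>d\<in>children par c. of_real (lam d) * w d) + of_real (lam c) * w t = r * w c"
      using eqs chx[OF c] chnx[OF c] pc[OF c] by auto
    have e2: "(r - of_real (bet c)) * w c - (\<Sum>d\<in>children par c. of_real (lam d) * w d) = of_real (lam c) * w t"
      using e by (simp add: algebra_simps)
    have "of_real (lam c) * w t = of_real (lam c) * (A c * ev r (?P c t))"
      using conjunct2[OF A[OF c]] e2 pc[OF c] by simp
    moreover have "complex_of_real (lam c) \<noteq> 0" using lam_pos[rule_format, of c] by simp
    ultimately show ?thesis by simp
  qed
  have dv: "\<And>c. c \<in> children par t \<Longrightarrow> ?P c t dvd L" unfolding L_def LL_def by (auto intro: dvd_Lcm)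
  have LQ: "\<And>c. c \<in> children par t \<Longrightarrow> ev r L = ev r (?P c t) * ev r (Q c)"
    using dv Q_def by (metis dvd_mult_div_cancel ev_mult)
  have Pts: "\<And>c s. c \<in> children par t \<Longrightarrow> s \<in> subtree par c \<Longrightarrow> ?P t s = Q c * ?P c s"
    using PS(3)[OF Suc(2)[symmetric]] Pc_eq dv Q_def L_def by metis
  have Ptt: "?P t t = L" using PS(1)[OF Suc(2)[symmetric]] L_def by simp
  have key: "\<exists>a. w t = a * ev r L \<and> (\<forall>c\<in>children par t. A c = a * ev r (Q c))"
  proof (cases "\<exists>c1\<in>children par t. ev r (?P c1 t) = 0")
    case True
    then obtain c1 where c1: "c1 \<in> children par t" "ev r (?P c1 t) = 0" by blast
    have oth: "\<And>c. c \<in> children par t \<Longrightarrow> c \<noteq> c1 \<Longrightarrow> ev r (?P c t) \<noteq> 0"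
      using nob Suc(3) c1 by blast
    have img: "(\<lambda>y. ?P y t) ` children par t = insert (?P c1 t) ((\<lambda>y. ?P y t) ` (children par t - {c1}))"
      using c1 by blast
    have p1nz: "?P c1 t \<noteq> 0" using Pnz[OF lam_pos, where t=c1 and bet=bet] pc[OF c1(1)] by (metis degree_0 nat.distinct(1))
    have Q1: "ev r (Q c1) \<noteq> 0"
      unfolding Q_def L_def LL_def img
      by (rule lcm1) (use fin_ch p1nz oth in auto)
    have wt0: "w t = 0" using wt[OF c1(1)] c1 by simp
    have L0: "ev r L = 0" using LQ[OF c1(1)] c1 by simp
    show ?thesis
    proof (rule exI[of _ "A c1 / ev r (Q c1)"], intro conjI ballI)
      show "w t = A c1 / ev r (Q c1) * ev r L" using wt0 L0 by simp
      fix c assume c: "c \<in> children par t"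
      show "A c = A c1 / ev r (Q c1) * ev r (Q c)"
      proof (cases "c = c1")
        case True then show ?thesis using Q1 by simp
      next
        case False
        have "A c = 0" using wt[OF c] wt0 oth[OF c False] by simp
        moreover have "ev r (Q c) = 0" using LQ[OF c] L0 oth[OF c False] by simp
        ultimately show ?thesis by simp
      qed
    qed
  next
    case False
    have Lnz: "ev r L \<noteq> 0" unfolding L_def LL_def by (rule lcm2) (use fin_ch False in auto)
    show ?thesis
    proof (rule exI[of _ "w t / ev r L"], intro conjI ballI)
      show "w t = w t / ev r L * ev r L" using Lnz by simp
      fix c assume c: "c \<in> children par t"
      have "ev r (?P c t) \<noteq> 0" using False c by blast
      then show "A c = w t / ev r L * ev r (Q c)"
        using wt[OF c] LQ[OF c] Lnz by (simp add: field_simps)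
    qed
  qed
  then obtain a where a: "w t = a * ev r L" "\<And>c. c \<in> children par t \<Longrightarrow> A c = a * ev r (Q c)" by blast
  have wc: "w c = a * ev r (Q c) * ev r (?P c c)" if c: "c \<in> children par t" for c
    using A[OF c] a(2)[OF c] by simp
  show ?case
  proof (rule exI[of _ a], intro conjI ballI)
    fix s assume s: "s \<in> subtree par t"
    show "w s = a * ev r (?P t s)"
    proof (cases "s = t")
      case True then show ?thesis using a(1) Ptt by simp
    next
      case False
      then obtain c where c: "c \<in> children par t" "s \<in> subtree par c" using sub_split s by blast
      then show ?thesis using A[OF c(1)] a(2)[OF c(1)] Pts[OF c] by simp
    qed
  next
    have lt: "complex_of_real (lam t) \<noteq> 0" using lam_pos[rule_format, of t] by simp
    have Pcc: "\<And>c. c \<in> children par t \<Longrightarrow> L * ?P c c div ?P c t = Q c * ?P c c"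
      using Pc_eq dv Q_def by metis
    have "ev r (?P t (par t)) = (1 / of_real (lam t)) * ((r - of_real (bet t)) * ev r L -
        (\<Sum>c\<in>children par t. of_real (lam c) * (ev r (Q c) * ev r (?P c c))))"
      unfolding PS(2)[OF Suc(2)[symmetric]] L_def[symmetric]
      by (simp add: ev_sum Pcc cong: sum.cong) (simp add: algebra_simps)
    then have "of_real (lam t) * a * ev r (?P t (par t)) = a * ((r - of_real (bet t)) * ev r L -
        (\<Sum>c\<in>children par t. of_real (lam c) * (ev r (Q c) * ev r (?P c c))))"
      using lt by simp
    also have "\<dots> = (r - of_real (bet t)) * w t - (\<Sum>c\<in>children par t. of_real (lam c) * w c)"
      using a(1) wc by (simp add: algebra_simps sum_distrib_left cong: sum.cong)
    finally show "(r - of_real (bet t)) * w t - (\<Sum>c\<in>children par t. of_real (lam c) * w c) =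
        of_real (lam t) * a * ev r (?P t (par t))" by simp
  qed
qed

end

theorem theorem2:
  fixes par :: "'v \<Rightarrow> 'v" and lev :: "'v \<Rightarrow> nat"
    and lam bet :: "'v \<Rightarrow> real" and x :: 'v and r :: complex
  assumes tree: "level_tree par lev"
    and lam_pos: "\<forall>v. lam v > 0"
    and eig: "is_eigenvalue_Jsub par lam bet x r"
  shows "poly (map_poly of_real (Ppoly par lev lam bet x (par x))) r = 0 \<or>
         (\<exists>y\<in>subtree par x. \<exists>y1\<in>children par y. \<exists>y2\<in>children par y. y1 \<noteq> y2 \<and>
            poly (map_poly of_real (Ppoly par lev lam bet y1 y)) r = 0 \<and>
            poly (map_poly of_real (Ppoly par lev lam bet y2 y)) r = 0)"
proof (rule disjCI)
  assume nb: "\<not> (\<exists>y\<in>subtree par x. \<exists>y1\<in>children par y. \<exists>y2\<in>children par y. y1 \<noteq> y2 \<and>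
            poly (map_poly of_real (Ppoly par lev lam bet y1 y)) r = 0 \<and>
            poly (map_poly of_real (Ppoly par lev lam bet y2 y)) r = 0)"
  then have nob: "\<not> (\<exists>y\<in>subtree par x. \<exists>y1\<in>children par y. \<exists>y2\<in>children par y. y1 \<noteq> y2 \<and>
            ev r (Ppoly par lev lam bet y1 y) = 0 \<and> ev r (Ppoly par lev lam bet y2 y) = 0)"
    by (simp add: ev_def)
  from eig obtain w where w0: "\<exists>t\<in>subtree par x. w t \<noteq> 0"
    and we: "\<forall>t\<in>subtree par x. Jsub par lam bet x w t = r * w t"
    unfolding is_eigenvalue_Jsub_def by blast
  have eqs: "\<forall>s\<in>subtree par x. s \<noteq> x \<longrightarrow> of_real (bet s) * w s + (\<Sum>c\<in>children par s. of_real (lam c) * w c) + of_real (lam s) * w (par s) = r * w s"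
    using we by (auto simp: Jsub_def)
  obtain a where a: "\<forall>s\<in>subtree par x. w s = a * ev r (Ppoly par lev lam bet x s)"
    "(r - of_real (bet x)) * w x - (\<Sum>c\<in>children par x. of_real (lam c) * w c) = of_real (lam x) * a * ev r (Ppoly par lev lam bet x (par x))"
    using inv[OF tree lam_pos eqs nob self_sub[OF tree]] by blast
  have "Jsub par lam bet x w x = r * w x" using we self_sub[OF tree] by blast
  then have "(r - of_real (bet x)) * w x - (\<Sum>c\<in>children par x. of_real (lam c) * w c) = 0"
    by (simp add: Jsub_def algebra_simps)
  moreover have "a \<noteq> 0" using a(1) w0 by auto
  moreover have "complex_of_real (lam x) \<noteq> 0" using lam_pos[rule_format, of x] by simp
  ultimately have "ev r (Ppoly par lev lam bet x (par x)) = 0" using a(2) by simp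
  then show "poly (map_poly of_real (Ppoly par lev lam bet x (par x))) r = 0" by (simp add: ev_def)
qed

end
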